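(* Let $(G,k)$ be an instance, $S\subseteq V$, and let $V_{\mathrm{tree}}$ be the union of the vertex sets of those connected components of $G-S$ that are trees. If $v\in S$ is large-dense and $|N(v)\cap V_{\mathrm{tree}}|\ge 2k+4$, then every feasible solution contains $v$; consequently $(G,k)$ is a yes-instance iff $(G-v,k-1)$ is.
   Context: Graphs are undirected, without self-loops, possibly with multi-edges. $N(v)$ is the set of vertices adjacent to $v$; $\rho(v)$ is the number of unordered pairs $\{u_1,u_2\}\subseteq N(v)$ joined by at least one edge. A vertex $v$ is large-dense if $|N(v)|>7k$ and $\rho(v)> |N(v)|(|N(v)|-1)/4$. A vertex set induces a clique if between any two distinct vertices there is exactly one edge, and a tree if it is connected and acyclic (two parallel edges form a cycle). A feasible solution is $X\subseteq V$, $|X|\le k$, with every component of $G-X$ a clique or a tree. *)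

theory Defs
  imports Complex_Main
begin

text \<open>A multigraph is given by a vertex set V and an edge-multiplicity function
  m :: 'a => 'a => nat (m u w = number of edges between u and w).\<close>

definition multigraph :: "'a set \<Rightarrow> ('a \<Rightarrow> 'a \<Rightarrow> nat) \<Rightarrow> bool" where
  "multigraph V m \<longleftrightarrow> finite V \<and> (\<forall>u w. m u w = m w u) \<and> (\<forall>u. m u u = 0)
     \<and> (\<forall>u w. 0 < m u w \<longrightarrow> u \<in> V \<and> w \<in> V)"

definition nbhd :: "'a set \<Rightarrow> ('a \<Rightarrow> 'a \<Rightarrow> nat) \<Rightarrow> 'a \<Rightarrow> 'a set" where
  "nbhd W m v = {u \<in> W. 0 < m v u}"

definition rho :: "'a set \<Rightarrow> ('a \<Rightarrow> 'a \<Rightarrow> nat) \<Rightarrow> 'a \<Rightarrow> nat" where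
  "rho W m v = card {{u1, u2} | u1 u2. u1 \<in> nbhd W m v \<and> u2 \<in> nbhd W m v \<and> u1 \<noteq> u2 \<and> 0 < m u1 u2}"

definition large_dense :: "'a set \<Rightarrow> ('a \<Rightarrow> 'a \<Rightarrow> nat) \<Rightarrow> nat \<Rightarrow> 'a \<Rightarrow> bool" where
  "large_dense W m k v \<longleftrightarrow> card (nbhd W m v) > 7 * k \<and>
     real (rho W m v) > real (card (nbhd W m v)) * (real (card (nbhd W m v)) - 1) / 4"

definition reach :: "'a set \<Rightarrow> ('a \<Rightarrow> 'a \<Rightarrow> nat) \<Rightarrow> 'a \<Rightarrow> 'a \<Rightarrow> bool" where
  "reach W m = (\<lambda>a b. a \<in> W \<and> b \<in> W \<and> 0 < m a b)\<^sup>*\<^sup>*"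

definition components :: "'a set \<Rightarrow> ('a \<Rightarrow> 'a \<Rightarrow> nat) \<Rightarrow> 'a set set" where
  "components W m = {C. \<exists>x \<in> W. C = {y \<in> W. reach W m x y}}"

definition induces_clique :: "'a set \<Rightarrow> ('a \<Rightarrow> 'a \<Rightarrow> nat) \<Rightarrow> bool" where
  "induces_clique C m \<longleftrightarrow> (\<forall>u \<in> C. \<forall>w \<in> C. u \<noteq> w \<longrightarrow> m u w = 1)"

definition connected_set :: "'a set \<Rightarrow> ('a \<Rightarrow> 'a \<Rightarrow> nat) \<Rightarrow> bool" where
  "connected_set C m \<longleftrightarrow> C \<noteq> {} \<and> (\<forall>u \<in> C. \<forall>w \<in> C. reach C m u w)"

definition has_cycle :: "'a set \<Rightarrow> ('a \<Rightarrow> 'a \<Rightarrow> nat) \<Rightarrow> bool" where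
  "has_cycle C m \<longleftrightarrow> (\<exists>u \<in> C. \<exists>w \<in> C. 2 \<le> m u w) \<or>
     (\<exists>cs. 3 \<le> length cs \<and> distinct cs \<and> set cs \<subseteq> C \<and>
        (\<forall>i < length cs. 0 < m (cs ! i) (cs ! ((i + 1) mod length cs))))"

definition induces_tree :: "'a set \<Rightarrow> ('a \<Rightarrow> 'a \<Rightarrow> nat) \<Rightarrow> bool" where
  "induces_tree C m \<longleftrightarrow> connected_set C m \<and> \<not> has_cycle C m"

definition feasible :: "'a set \<Rightarrow> ('a \<Rightarrow> 'a \<Rightarrow> nat) \<Rightarrow> int \<Rightarrow> 'a set \<Rightarrow> bool" where
  "feasible V m k X \<longleftrightarrow> X \<subseteq> V \<and> int (card X) \<le> k \<and>
     (\<forall>C \<in> components (V - X) m. induces_clique C m \<or> induces_tree C m)"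

definition yes_instance :: "'a set \<Rightarrow> ('a \<Rightarrow> 'a \<Rightarrow> nat) \<Rightarrow> int \<Rightarrow> bool" where
  "yes_instance V m k \<longleftrightarrow> (\<exists>X. feasible V m k X)"

definition del_vertex :: "('a \<Rightarrow> 'a \<Rightarrow> nat) \<Rightarrow> 'a \<Rightarrow> 'a \<Rightarrow> 'a \<Rightarrow> nat" where
  "del_vertex m v = (\<lambda>a b. if a = v \<or> b = v then 0 else m a b)"

definition V_tree :: "'a set \<Rightarrow> ('a \<Rightarrow> 'a \<Rightarrow> nat) \<Rightarrow> 'a set \<Rightarrow> 'a set" where
  "V_tree V m S = \<Union> {C \<in> components (V - S) m. induces_tree C m}"

end

theory Submission
  imports Defs
begin

lemma reach_cong:
  assumes "\<forall>a\<in>W. \<forall>b\<in>W. m a b = m' a b"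
  shows "reach W m = reach W m'"
proof -
  have "(\<lambda>a b. a \<in> W \<and> b \<in> W \<and> 0 < m a b) = (\<lambda>a b. a \<in> W \<and> b \<in> W \<and> 0 < m' a b)"
    using assms by (auto intro!: ext)
  then show ?thesis unfolding reach_def by simp
qed

lemma components_cong:
  assumes "\<forall>a\<in>W. \<forall>b\<in>W. m a b = m' a b"
  shows "components W m = components W m'"
  unfolding components_def using reach_cong[OF assms] by simp

lemma has_cycle_cong:
  assumes "\<forall>a\<in>C. \<forall>b\<in>C. m a b = m' a b"
  shows "has_cycle C m = has_cycle C m'"
proof -
  have "(\<forall>i < length cs. 0 < m (cs ! i) (cs ! ((i + 1) mod length cs))) =
        (\<forall>i < length cs. 0 < m' (cs ! i) (cs ! ((i + 1) mod length cs)))"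
    if "set cs \<subseteq> C" "3 \<le> length cs" for cs
  proof -
    have "i < length cs \<Longrightarrow> m (cs ! i) (cs ! ((i + 1) mod length cs)) = m' (cs ! i) (cs ! ((i + 1) mod length cs))" for i
    proof -
      assume i: "i < length cs"
      have "cs ! i \<in> C" using i that nth_mem by blast
      moreover have "cs ! ((i + 1) mod length cs) \<in> C"
      proof -
        have "(i + 1) mod length cs < length cs" using that(2) by (intro mod_less_divisor) linarith
        then show ?thesis using that(1) nth_mem by blast
      qed
      ultimately show ?thesis using assms by blast
    qed
    then show ?thesis by auto
  qed
  then have B: "(\<exists>cs. 3 \<le> length cs \<and> distinct cs \<and> set cs \<subseteq> C \<and>
        (\<forall>i < length cs. 0 < m (cs ! i) (cs ! ((i + 1) mod length cs)))) =
    (\<exists>cs. 3 \<le> length cs \<and> distinct cs \<and> set cs \<subseteq> C \<and>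
        (\<forall>i < length cs. 0 < m' (cs ! i) (cs ! ((i + 1) mod length cs))))"
    by (intro ex_cong1) (metis (no_types, lifting))
  have A: "(\<exists>u \<in> C. \<exists>w \<in> C. 2 \<le> m u w) = (\<exists>u \<in> C. \<exists>w \<in> C. 2 \<le> m' u w)"
    using assms by auto
  show ?thesis unfolding has_cycle_def A B ..
qed

lemma tree_cong:
  assumes "\<forall>a\<in>C. \<forall>b\<in>C. m a b = m' a b"
  shows "induces_tree C m = induces_tree C m'"
    and "induces_clique C m = induces_clique C m'"
  unfolding induces_tree_def connected_set_def induces_clique_def
  using has_cycle_cong[OF assms] reach_cong[OF assms] assms by auto

lemma comp_sub: "C \<in> components W m \<Longrightarrow> C \<subseteq> W"
  unfolding components_def by auto

lemma feas_equiv: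
  assumes "v \<notin> W"
  shows "(\<forall>C \<in> components W m. induces_clique C m \<or> induces_tree C m) =
         (\<forall>C \<in> components W (del_vertex m v). induces_clique C (del_vertex m v) \<or> induces_tree C (del_vertex m v))"
proof -
  have ag: "\<forall>a\<in>W. \<forall>b\<in>W. m a b = del_vertex m v a b" using assms unfolding del_vertex_def by auto
  have ce: "components W m = components W (del_vertex m v)" by (rule components_cong[OF ag])
  have "(induces_clique C m \<or> induces_tree C m) = (induces_clique C (del_vertex m v) \<or> induces_tree C (del_vertex m v))"
    if "C \<in> components W m" for C
  proof -
    have "\<forall>a\<in>C. \<forall>b\<in>C. m a b = del_vertex m v a b"
      using comp_sub[OF that] ag by blast
    then show ?thesis using tree_cong by blast
  qed
  then show ?thesis unfolding ce[symmetric] by blast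
qed

lemma rho_bound:
  assumes fin: "finite N" "finite X"
    and R: "\<And>u1 u2. u1 \<in> N \<Longrightarrow> u2 \<in> N \<Longrightarrow> u1 \<noteq> u2 \<Longrightarrow> 0 < m u1 u2 \<Longrightarrow> u1 \<in> X \<or> u2 \<in> X"
  shows "card {{u1, u2} | u1 u2. u1 \<in> N \<and> u2 \<in> N \<and> u1 \<noteq> u2 \<and> 0 < m u1 u2} \<le> card (N \<inter> X) * card N"
proof -
  have "{{u1, u2} | u1 u2. u1 \<in> N \<and> u2 \<in> N \<and> u1 \<noteq> u2 \<and> 0 < m u1 u2} \<subseteq> (\<lambda>(x,u). {x,u}) ` ((N \<inter> X) \<times> N)"
  proof
    fix p assume "p \<in> {{u1, u2} | u1 u2. u1 \<in> N \<and> u2 \<in> N \<and> u1 \<noteq> u2 \<and> 0 < m u1 u2}"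
    then obtain u1 u2 where p: "p = {u1,u2}" "u1 \<in> N" "u2 \<in> N" "u1 \<noteq> u2" "0 < m u1 u2" by blast
    then have "u1 \<in> X \<or> u2 \<in> X" using R by blast
    then show "p \<in> (\<lambda>(x,u). {x,u}) ` ((N \<inter> X) \<times> N)"
    proof
      assume "u1 \<in> X" then show ?thesis using p by (auto intro!: image_eqI[of _ _ "(u1,u2)"])
    next
      assume "u2 \<in> X" then show ?thesis using p by (auto intro!: image_eqI[of _ _ "(u2,u1)"])
    qed
  qed
  then have "card {{u1, u2} | u1 u2. u1 \<in> N \<and> u2 \<in> N \<and> u1 \<noteq> u2 \<and> 0 < m u1 u2} \<le> card ((\<lambda>(x,u). {x,u}) ` ((N \<inter> X) \<times> N))"
    using fin by (intro card_mono) auto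
  also have "\<dots> \<le> card ((N \<inter> X) \<times> N)" by (rule card_image_le) (use fin in auto)
  also have "\<dots> = card (N \<inter> X) * card N" by (simp add: card_cartesian_product)
  finally show ?thesis .
qed

lemma part1:
  fixes V :: "'a set" and m :: "'a \<Rightarrow> 'a \<Rightarrow> nat" and k :: nat and S :: "'a set" and v :: 'a
  assumes mg: "multigraph V m"
    and "S \<subseteq> V"
    and "v \<in> S"
    and ld: "large_dense V m k v"
    and Tc: "card (nbhd V m v \<inter> V_tree V m S) \<ge> 2 * k + 4"
    and fe: "feasible V m (int k) X"
  shows "v \<in> X"
proof (rule ccontr)
  assume vX: "v \<notin> X"
  have finV: "finite V" using mg unfolding multigraph_def by auto
  have sym: "\<And>a b. m a b = m b a" and mvv: "\<And>a. m a a = 0"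
    using mg unfolding multigraph_def by auto
  have XV: "X \<subseteq> V" and cX: "card X \<le> k" using fe unfolding feasible_def by auto
  have finX: "finite X" using XV finV finite_subset by blast
  define W where "W = V - X"
  have vW: "v \<in> W" using assms vX unfolding W_def by auto
  define C where "C = {y \<in> W. reach W m v y}"
  have Ccomp: "C \<in> components W m" unfolding C_def components_def using vW by auto
  have vC: "v \<in> C" unfolding C_def reach_def using vW by auto
  define N where "N = nbhd V m v"
  have finN: "finite N" unfolding N_def nbhd_def using finV by auto
  have NC: "u \<in> C" if "u \<in> N" "u \<notin> X" for u
  proof -
    have "u \<in> W" using that unfolding N_def nbhd_def W_def by auto
    moreover have "0 < m v u" using that unfolding N_def nbhd_def by auto
    ultimately have "reach W m v u" unfolding reach_def using vW by auto
    then show ?thesis unfolding C_def using \<open>u \<in> W\<close> by auto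
  qed
  have "induces_clique C m \<or> induces_tree C m" using fe Ccomp unfolding feasible_def W_def by auto
  then show False
  proof
    assume cl: "induces_clique C m"
    define T where "T = N \<inter> V_tree V m S - X"
    have "card (N \<inter> V_tree V m S) \<le> card T + card X"
    proof -
      have "N \<inter> V_tree V m S \<subseteq> T \<union> X" unfolding T_def by auto
      then have "card (N \<inter> V_tree V m S) \<le> card (T \<union> X)"
        using finN finX unfolding T_def by (intro card_mono) auto
      also have "\<dots> \<le> card T + card X" by (rule card_Un_le)
      finally show ?thesis .
    qed
    then have "card T \<ge> 3" using Tc cX unfolding N_def by linarith
    then obtain T3 where "T3 \<subseteq> T" "card T3 = 3"
      by (meson obtain_subset_with_card_n)
    then obtain a b c where abc: "a \<in> T" "b \<in> T" "c \<in> T" "a \<noteq> b" "b \<noteq> c" "a \<noteq> c"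
      unfolding card_3_iff by auto
    have inC: "a \<in> C" "b \<in> C" "c \<in> C" using abc NC unfolding T_def by auto
    have e: "m a b = 1" "m b c = 1" "m a c = 1" using cl inC abc unfolding induces_clique_def by auto
    have "a \<in> V_tree V m S" using abc unfolding T_def by auto
    then obtain D where D: "D \<in> components (V - S) m" "induces_tree D m" "a \<in> D"
      unfolding V_tree_def by auto
    obtain x where x: "x \<in> V - S" "D = {y \<in> V - S. reach (V - S) m x y}"
      using D(1) unfolding components_def by auto
    have inVS: "b \<in> V - S" "c \<in> V - S"
      using abc comp_sub unfolding T_def V_tree_def by blast+
    have ra: "reach (V - S) m x a" "a \<in> V - S" using D(3) x by auto
    have "reach (V - S) m x b" using ra inVS e unfolding reach_def
      by (intro rtranclp.rtrancl_into_rtrancl[of _ x a b]) auto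
    have "reach (V - S) m x c" using ra inVS e unfolding reach_def
      by (intro rtranclp.rtrancl_into_rtrancl[of _ x a c]) auto
    have bD: "b \<in> D" "c \<in> D" using x \<open>reach (V - S) m x b\<close> \<open>reach (V - S) m x c\<close> inVS by auto
    have "has_cycle D m"
      unfolding has_cycle_def
    proof (intro disjI2 exI[of _ "[a,b,c]"] conjI)
      show "\<forall>i<length [a, b, c]. 0 < m ([a, b, c] ! i) ([a, b, c] ! ((i + 1) mod length [a, b, c]))"
      proof (intro allI impI)
        fix i assume "i < length [a,b,c]"
        then have "i = 0 \<or> i = 1 \<or> i = 2" by auto
        then show "0 < m ([a, b, c] ! i) ([a, b, c] ! ((i + 1) mod length [a, b, c]))"
          using e sym[of c a] by auto
      qed
    qed (use abc D(3) bD in auto)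
    then show False using D(2) unfolding induces_tree_def by auto
  next
    assume tr: "induces_tree C m"
    then have nc: "\<not> has_cycle C m" unfolding induces_tree_def by auto
    have R: "u1 \<in> X \<or> u2 \<in> X" if "u1 \<in> N" "u2 \<in> N" "u1 \<noteq> u2" "0 < m u1 u2" for u1 u2
    proof (rule ccontr)
      assume "\<not> (u1 \<in> X \<or> u2 \<in> X)"
      then have in2: "u1 \<in> C" "u2 \<in> C" using NC that by auto
      have e: "0 < m v u1" "0 < m v u2" using that unfolding N_def nbhd_def by auto
      have d: "v \<noteq> u1" "v \<noteq> u2" using e mvv by (metis less_irrefl)+
      have "has_cycle C m"
        unfolding has_cycle_def
      proof (intro disjI2 exI[of _ "[v,u1,u2]"] conjI)
        show "\<forall>i<length [v,u1,u2]. 0 < m ([v,u1,u2] ! i) ([v,u1,u2] ! ((i + 1) mod length [v,u1,u2]))"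
        proof (intro allI impI)
          fix i assume "i < length [v,u1,u2]"
          then have "i = 0 \<or> i = 1 \<or> i = 2" by auto
          then show "0 < m ([v,u1,u2] ! i) ([v,u1,u2] ! ((i + 1) mod length [v,u1,u2]))"
            using e that sym[of u2 v] by auto
        qed
      qed (use d that in2 vC in auto)
      then show False using nc by simp
    qed
    have rb: "rho V m v \<le> card (N \<inter> X) * card N"
      unfolding rho_def N_def[symmetric] by (rule rho_bound[OF finN finX R])
    have "card (N \<inter> X) \<le> k" using cX finX by (meson card_mono inf_le2 le_trans)
    then have r2: "rho V m v \<le> k * card N" using rb by (meson le_trans mult_le_mono1)
    define d where "d = card N"
    have d7: "d > 7 * k" and rg: "real (rho V m v) > real d * (real d - 1) / 4"
      using ld unfolding large_dense_def d_def N_def by auto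
    have "4 * k \<le> d - 1" using d7 by linarith
    then have "4 * k * d \<le> (d - 1) * d" by (rule mult_le_mono1)
    then have "real (4 * k * d) \<le> real ((d - 1) * d)" by (simp only: of_nat_le_iff)
    then have h: "4 * (real k * real d) \<le> real (d - 1) * real d" by simp
    have d1: "real (d - 1) = real d - 1" using d7 by (simp add: of_nat_diff)
    have "4 * (real k * real d) \<le> real d * (real d - 1)" using h unfolding d1 by (simp add: mult.commute)
    moreover have "real (rho V m v) \<le> real k * real d" using r2 unfolding d_def
      by (metis of_nat_le_iff of_nat_mult)
    ultimately show False using rg by linarith
  qed
qed

theorem mainTheorem16:
  fixes V :: "'a set" and m :: "'a \<Rightarrow> 'a \<Rightarrow> nat" and k :: nat and S :: "'a set" and v :: 'a
  assumes "multigraph V m"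
    and "S \<subseteq> V"
    and "v \<in> S"
    and "large_dense V m k v"
    and "card (nbhd V m v \<inter> V_tree V m S) \<ge> 2 * k + 4"
  shows "(\<forall>X. feasible V m (int k) X \<longrightarrow> v \<in> X)
    \<and> (yes_instance V m (int k) \<longleftrightarrow> yes_instance (V - {v}) (del_vertex m v) (int k - 1))"
proof -
  have P1: "\<forall>X. feasible V m (int k) X \<longrightarrow> v \<in> X" using part1[OF assms] by blast
  have finV: "finite V" using assms(1) unfolding multigraph_def by auto
  have "yes_instance V m (int k) \<longleftrightarrow> yes_instance (V - {v}) (del_vertex m v) (int k - 1)"
  proof
    assume "yes_instance V m (int k)"
    then obtain X where X: "feasible V m (int k) X" unfolding yes_instance_def by auto
    have vX: "v \<in> X" using P1 X by auto
    have XV: "X \<subseteq> V" using X unfolding feasible_def by auto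
    have finX: "finite X" using XV finV finite_subset by blast
    have eq: "V - {v} - (X - {v}) = V - X" using vX by auto
    have c1: "card (X - {v}) = card X - 1" using vX finX by (simp add: card_Diff_singleton)
    have c0: "card X \<ge> 1" using vX finX by (metis One_nat_def Suc_leI card_gt_0_iff empty_iff)
    have ck: "int (card X) \<le> int k" using X unfolding feasible_def by auto
    have cc: "\<forall>C \<in> components (V - X) m. induces_clique C m \<or> induces_tree C m"
      using X unfolding feasible_def by auto
    have "v \<notin> V - X" using vX by auto
    note fe = feas_equiv[OF this, of m]
    have "feasible (V - {v}) (del_vertex m v) (int k - 1) (X - {v})"
      unfolding feasible_def eq
    proof (intro conjI)
      show "X - {v} \<subseteq> V - {v}" using XV by auto
      show "int (card (X - {v})) \<le> int k - 1" using c1 c0 ck by linarith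
    qed (use cc fe in blast)
    then show "yes_instance (V - {v}) (del_vertex m v) (int k - 1)" unfolding yes_instance_def by auto
  next
    assume "yes_instance (V - {v}) (del_vertex m v) (int k - 1)"
    then obtain Y where Y: "feasible (V - {v}) (del_vertex m v) (int k - 1) Y" unfolding yes_instance_def by auto
    have YV: "Y \<subseteq> V - {v}" using Y unfolding feasible_def by auto
    have finY: "finite Y" using YV finV finite_subset by blast
    have eq: "V - {v} - Y = V - insert v Y" by auto
    have vV: "v \<in> V" using assms(2,3) by auto
    have c1: "card (insert v Y) = card Y + 1" using YV finY by (auto simp add: card_insert_if)
    have ck: "int (card Y) \<le> int k - 1" using Y unfolding feasible_def by auto
    have cc: "\<forall>C \<in> components (V - insert v Y) (del_vertex m v). induces_clique C (del_vertex m v) \<or> induces_tree C (del_vertex m v)"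
      using Y unfolding feasible_def eq by auto
    have "v \<notin> V - insert v Y" by auto
    note fe = feas_equiv[OF this, of m]
    have "feasible V m (int k) (insert v Y)"
      unfolding feasible_def
    proof (intro conjI)
      show "insert v Y \<subseteq> V" using YV vV by auto
      show "int (card (insert v Y)) \<le> int k" using c1 ck by linarith
    qed (use cc fe in blast)
    then show "yes_instance V m (int k)" unfolding yes_instance_def by auto
  qed
  with P1 show ?thesis by blast
qed

end
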